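(* Let $P_n$ be a labeled path whose ribbon diagram $RT(P_n)$ has composition $\alpha=(\alpha_1,\dots,\alpha_k)$ with $k\ge 2$ and $\alpha_i\ge 2$ for every $i$. Then $X(P_n;\mathbf{x},q)$ is not symmetric.
   Context: A labeled path $P_n$ is the path graph with vertices $v_1,\dots,v_n$ (edges $v_iv_{i+1}$) where $v_i$ carries label $\sigma_i$ for a permutation $\sigma$ of $[n]$; vertices are identified with labels. A proper coloring is $c\colon[n]\to\{1,2,\dots\}$ with adjacent vertices colored differently; $\operatorname{asc}(c)=\#\{ij\in E: i<j,\ c(i)<c(j)\}$. The CQF is $X(P_n;\mathbf{x},q)=\sum_{c \text{ proper}} x_{c(1)}\cdots x_{c(n)}q^{\operatorname{asc}(c)}$; it is symmetric if each coefficient of $q^k$ is a symmetric function. The ad-pattern of $P_n$ is $w_1\cdots w_{n-1}$ with $w_i=a$ if $\sigma_i<\sigma_{i+1}$ and $w_i=d$ otherwise. The ribbon diagram $RT(P_n)$: start with box $1$, and for $i=1,\dots,n-1$ place box $i+1$ immediately right of box $i$ if $w_i=a$ and immediately above box $i$ if $w_i=d$. Its composition is $(\alpha_1,\dots,\alpha_\ell)$, where $\alpha_j$ is the number of boxes in the $j$-th row counted from the bottom (equivalently, the lengths of the maximal runs of consecutive boxes joined by $a$-steps, in order). *)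

theory Defs
  imports Main "HOL-Library.FuncSet"
begin

text \<open>A labeled path P_n is given by a permutation sigma of {1..n}: vertex v_i carries
label sigma i, and the edges are {sigma i, sigma (i+1)} for 1 <= i < n.
Vertices are identified with their labels, so colorings are functions on {1..n}.\<close>

definition is_labeled_path :: "nat \<Rightarrow> (nat \<Rightarrow> nat) \<Rightarrow> bool" where
  "is_labeled_path n \<sigma> \<longleftrightarrow> bij_betw \<sigma> {1..n} {1..n}"

definition proper_coloring :: "nat \<Rightarrow> (nat \<Rightarrow> nat) \<Rightarrow> (nat \<Rightarrow> nat) \<Rightarrow> bool" where
  "proper_coloring n \<sigma> c \<longleftrightarrow> c \<in> {1..n} \<rightarrow>\<^sub>E {1..} \<and>
     (\<forall>i\<in>{1..<n}. c (\<sigma> i) \<noteq> c (\<sigma> (Suc i)))"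

definition asc :: "nat \<Rightarrow> (nat \<Rightarrow> nat) \<Rightarrow> (nat \<Rightarrow> nat) \<Rightarrow> nat" where
  "asc n \<sigma> c = card {i\<in>{1..<n}.
      (\<sigma> i < \<sigma> (Suc i) \<and> c (\<sigma> i) < c (\<sigma> (Suc i))) \<or>
      (\<sigma> (Suc i) < \<sigma> i \<and> c (\<sigma> (Suc i)) < c (\<sigma> i))}"

text \<open>Coefficient of x^mu q^k in the chromatic quasisymmetric function X(P_n; x, q):
the number of proper colorings c with asc c = k such that color i is used exactly
mu i times for every i >= 1 (mu 0 is irrelevant, since colors are positive).\<close>
definition cqf_coeff :: "nat \<Rightarrow> (nat \<Rightarrow> nat) \<Rightarrow> (nat \<Rightarrow> nat) \<Rightarrow> nat \<Rightarrow> nat" where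
  "cqf_coeff n \<sigma> \<mu> k = card {c. proper_coloring n \<sigma> c \<and> asc n \<sigma> c = k \<and>
      (\<forall>i\<ge>1. card {v\<in>{1..n}. c v = i} = \<mu> i)}"

text \<open>X is symmetric iff each q^k coefficient is a symmetric function, i.e. its
coefficients are invariant under every permutation of the variables x_1, x_2, ...\<close>
definition cqf_symmetric :: "nat \<Rightarrow> (nat \<Rightarrow> nat) \<Rightarrow> bool" where
  "cqf_symmetric n \<sigma> \<longleftrightarrow>
     (\<forall>k \<mu> \<pi>. bij_betw \<pi> {1..} {1..} \<longrightarrow> cqf_coeff n \<sigma> (\<mu> \<circ> \<pi>) k = cqf_coeff n \<sigma> \<mu> k)"

text \<open>ad-pattern: True = a (ascent sigma i < sigma (i+1)), False = d.\<close>
definition ad_pattern :: "nat \<Rightarrow> (nat \<Rightarrow> nat) \<Rightarrow> bool list" where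
  "ad_pattern n \<sigma> = map (\<lambda>i. \<sigma> i < \<sigma> (Suc i)) [1..<n]"

text \<open>Composition of the ribbon diagram: start with one row containing box 1; an a-step
adds a box to the current row, a d-step starts a new row above.\<close>
definition ribbon_composition :: "nat \<Rightarrow> (nat \<Rightarrow> nat) \<Rightarrow> nat list" where
  "ribbon_composition n \<sigma> =
     foldl (\<lambda>\<alpha> b. if b then butlast \<alpha> @ [last \<alpha> + 1] else \<alpha> @ [1]) [1] (ad_pattern n \<sigma>)"

end

theory Submission
  imports Defs
begin


definition sw :: "nat \<Rightarrow> nat" where
  "sw x = (if x = 1 then 2 else if x = 2 then 1 else x)"

lemma sw_sw[simp]: "sw (sw x) = x" by (simp add: sw_def)
lemma sw_12: "sw x \<in> {1,2} \<longleftrightarrow> x \<in> {1,2}" by (auto simp: sw_def)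
lemma sw_ge1: "x \<ge> 1 \<Longrightarrow> sw x \<ge> 1" by (auto simp: sw_def)
lemma sw_inj: "sw x = sw y \<longleftrightarrow> x = y" by (metis sw_sw)
lemma sw_big[simp]: "x \<ge> 3 \<Longrightarrow> sw x = x" by (auto simp: sw_def)

lemma asc_alt:
  assumes "inj_on \<sigma> {1..n}" "\<forall>i\<in>{1..<n}. c (\<sigma> i) \<noteq> c (\<sigma> (Suc i))"
  shows "asc n \<sigma> c = card {i\<in>{1..<n}. (\<sigma> i < \<sigma> (Suc i)) = (c (\<sigma> i) < c (\<sigma> (Suc i)))}"
proof -
  have "\<And>i. i \<in> {1..<n} \<Longrightarrow> \<sigma> i \<noteq> \<sigma> (Suc i)"
    using assms(1) by (auto dest: inj_onD)
  then have "{i\<in>{1..<n}.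
      (\<sigma> i < \<sigma> (Suc i) \<and> c (\<sigma> i) < c (\<sigma> (Suc i))) \<or>
      (\<sigma> (Suc i) < \<sigma> i \<and> c (\<sigma> (Suc i)) < c (\<sigma> i))} =
     {i\<in>{1..<n}. (\<sigma> i < \<sigma> (Suc i)) = (c (\<sigma> i) < c (\<sigma> (Suc i)))}"
    using assms(2) by (auto simp: linorder_neq_iff)
  then show ?thesis by (simp add: asc_def)
qed

lemma count_pos:
  assumes "bij_betw \<sigma> {1..n} {1..n}"
  shows "card {v\<in>{1..n}. c v = k} = card {i\<in>{1..n}. c (\<sigma> i) = k}"
proof -
  have "{v\<in>{1..n}. c v = k} = \<sigma> ` {i\<in>{1..n}. c (\<sigma> i) = k}"
  proof (rule set_eqI, rule iffI)
    fix x assume "x \<in> {v\<in>{1..n}. c v = k}"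
    then obtain i where "i \<in> {1..n}" "x = \<sigma> i" "c x = k" using assms
      by (auto simp: bij_betw_def) (metis atLeastAtMost_iff imageE)
    then show "x \<in> \<sigma> ` {i\<in>{1..n}. c (\<sigma> i) = k}" by auto
  next
    fix x assume "x \<in> \<sigma> ` {i\<in>{1..n}. c (\<sigma> i) = k}"
    then show "x \<in> {v\<in>{1..n}. c v = k}" using assms by (auto dest: bij_betwE)
  qed
  moreover have "inj_on \<sigma> {i\<in>{1..n}. c (\<sigma> i) = k}"
    using assms by (auto simp: bij_betw_def intro: inj_on_subset)
  ultimately show ?thesis by (simp add: card_image)
qed

definition SS :: "(nat\<Rightarrow>nat) \<Rightarrow> (nat\<Rightarrow>nat) \<Rightarrow> nat \<Rightarrow> bool" where
  "SS \<sigma> c i \<longleftrightarrow> c (\<sigma> i) \<in> {1,2}"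
definition isoP :: "nat \<Rightarrow> (nat\<Rightarrow>nat) \<Rightarrow> (nat\<Rightarrow>nat) \<Rightarrow> nat \<Rightarrow> bool" where
  "isoP n \<sigma> c i \<longleftrightarrow> \<not>(2 \<le> i \<and> SS \<sigma> c (i-1)) \<and> \<not>(i+1 \<le> n \<and> SS \<sigma> c (i+1))"
definition triple :: "nat \<Rightarrow> (nat\<Rightarrow>nat) \<Rightarrow> (nat\<Rightarrow>nat) \<Rightarrow> bool" where
  "triple n \<sigma> c \<longleftrightarrow> (\<exists>j. 2 \<le> j \<and> j+1 \<le> n \<and> SS \<sigma> c (j-1) \<and> SS \<sigma> c j \<and> SS \<sigma> c (j+1))"
definition FF :: "nat \<Rightarrow> (nat\<Rightarrow>nat) \<Rightarrow> (nat\<Rightarrow>nat) \<Rightarrow> nat \<Rightarrow> nat" where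
  "FF n \<sigma> c i = (if triple n \<sigma> c \<or> isoP n \<sigma> c i then sw (c (\<sigma> i)) else c (\<sigma> i))"
definition ff :: "nat \<Rightarrow> (nat\<Rightarrow>nat) \<Rightarrow> (nat\<Rightarrow>nat) \<Rightarrow> nat \<Rightarrow> nat" where
  "ff n \<sigma> c x = (if x \<in> {1..n} then FF n \<sigma> c (the_inv_into {1..n} \<sigma> x) else c x)"

lemma ff_pos:
  assumes "bij_betw \<sigma> {1..n} {1..n}" "i \<in> {1..n}"
  shows "ff n \<sigma> c (\<sigma> i) = FF n \<sigma> c i"
proof -
  have "\<sigma> i \<in> {1..n}" using assms bij_betwE by blast
  moreover have "the_inv_into {1..n} \<sigma> (\<sigma> i) = i"
    using assms by (simp add: bij_betw_def the_inv_into_f_f)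
  ultimately show ?thesis by (simp add: ff_def)
qed

lemma SS_ff:
  assumes "bij_betw \<sigma> {1..n} {1..n}" "i \<in> {1..n}"
  shows "SS \<sigma> (ff n \<sigma> c) i = SS \<sigma> c i"
  using ff_pos[OF assms] by (auto simp: SS_def FF_def sw_def)

lemma triple_ff:
  assumes "bij_betw \<sigma> {1..n} {1..n}"
  shows "triple n \<sigma> (ff n \<sigma> c) = triple n \<sigma> c"
proof -
  have "\<And>j. 2 \<le> j \<Longrightarrow> j+1 \<le> n \<Longrightarrow>
    (SS \<sigma> (ff n \<sigma> c) (j-1) \<and> SS \<sigma> (ff n \<sigma> c) j \<and> SS \<sigma> (ff n \<sigma> c) (j+1)) =
    (SS \<sigma> c (j-1) \<and> SS \<sigma> c j \<and> SS \<sigma> c (j+1))"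
  proof -
    fix j assume j: "2 \<le> j" "j+1 \<le> n"
    then have "j-1 \<in> {1..n}" "j \<in> {1..n}" "j+1 \<in> {1..n}" by auto
    then show "?thesis j" using SS_ff[OF assms] by metis
  qed
  then show ?thesis unfolding triple_def by blast
qed

lemma isoP_ff:
  assumes "bij_betw \<sigma> {1..n} {1..n}" "i \<in> {1..n}"
  shows "isoP n \<sigma> (ff n \<sigma> c) i = isoP n \<sigma> c i"
proof -
  have a: "2 \<le> i \<Longrightarrow> SS \<sigma> (ff n \<sigma> c) (i-1) = SS \<sigma> c (i-1)"
    by (rule SS_ff[OF assms(1)]) (use assms(2) in auto)
  have b: "i+1 \<le> n \<Longrightarrow> SS \<sigma> (ff n \<sigma> c) (i+1) = SS \<sigma> c (i+1)"
    by (rule SS_ff[OF assms(1)]) (use assms(2) in auto)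
  show ?thesis unfolding isoP_def using a b by blast
qed

lemma ff_ff:
  assumes "bij_betw \<sigma> {1..n} {1..n}"
  shows "ff n \<sigma> (ff n \<sigma> c) = c"
proof
  fix x
  show "ff n \<sigma> (ff n \<sigma> c) x = c x"
  proof (cases "x \<in> {1..n}")
    case True
    then obtain i where i: "i \<in> {1..n}" "x = \<sigma> i" using assms
      by (metis bij_betw_def imageE)
    show ?thesis using ff_pos[OF assms i(1)] triple_ff[OF assms] isoP_ff[OF assms i(1)]
      by (simp add: i(2) FF_def ff_pos[OF assms i(1)])
  next
    case False then show ?thesis unfolding ff_def by auto
  qed
qed



definition FR :: "nat list \<Rightarrow> bool \<Rightarrow> nat list" where
  "FR \<alpha> b = (if b then butlast \<alpha> @ [last \<alpha> + 1] else \<alpha> @ [1])"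

lemma ribbon_FR: "ribbon_composition n \<sigma> = foldl FR [1] (ad_pattern n \<sigma>)"
  unfolding ribbon_composition_def FR_def by (rule refl)

lemma foldl_FR_true: "\<forall>b\<in>set bs. b \<Longrightarrow> foldl FR [x] bs = [x + length bs]"
  by (induction bs arbitrary: x) (auto simp: FR_def)

lemma foldl_FR_hd: "length \<alpha> \<ge> 2 \<Longrightarrow> hd (foldl FR \<alpha> bs) = hd \<alpha> \<and> length (foldl FR \<alpha> bs) \<ge> 2"
proof (induction bs arbitrary: \<alpha>)
  case Nil then show ?case by simp
next
  case (Cons b bs)
  obtain a \<beta> where ab: "\<alpha> = a # \<beta>" "\<beta> \<noteq> []" using Cons.prems
    by (cases \<alpha>) force+
  have "length (FR \<alpha> b) \<ge> 2" "hd (FR \<alpha> b) = hd \<alpha>"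
    using Cons.prems ab by (auto simp: FR_def)
  then show ?case using Cons.IH[of "FR \<alpha> b"] by simp
qed

lemma peak_exists:
  assumes "n \<ge> 1" "bij_betw \<sigma> {1..n} {1..n}"
    and "length (ribbon_composition n \<sigma>) \<ge> 2"
    and "\<forall>a\<in>set (ribbon_composition n \<sigma>). a \<ge> 2"
  shows "\<exists>p. 2 \<le> p \<and> p + 1 \<le> n \<and> \<sigma> (p-1) < \<sigma> p \<and> \<sigma> (p+1) < \<sigma> p"
proof -
  have ex: "\<exists>i. 1 \<le> i \<and> i < n \<and> \<not> \<sigma> i < \<sigma> (Suc i)"
  proof (rule ccontr)
    assume "\<not> ?thesis"
    then have "\<forall>b\<in>set (ad_pattern n \<sigma>). b" by (auto simp: ad_pattern_def)
    then have "ribbon_composition n \<sigma> = [1 + length (ad_pattern n \<sigma>)]"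
      by (simp add: ribbon_FR foldl_FR_true)
    then show False using assms(3) by simp
  qed
  then have n2: "n \<ge> 2" by auto
  have s12: "\<sigma> 1 < \<sigma> 2"
  proof (rule ccontr)
    assume h: "\<not> \<sigma> 1 < \<sigma> 2"
    have "[1..<n] = 1 # [2..<n]" using n2 upt_conv_Cons[of 1 n] by (simp add: numeral_2_eq_2)
    then have "ad_pattern n \<sigma> = False # map (\<lambda>i. \<sigma> i < \<sigma> (Suc i)) [2..<n]"
      using h by (simp add: ad_pattern_def numeral_2_eq_2)
    then have "ribbon_composition n \<sigma> = foldl FR [1,1] (map (\<lambda>i. \<sigma> i < \<sigma> (Suc i)) [2..<n])"
      by (simp add: ribbon_FR FR_def)
    then have "hd (ribbon_composition n \<sigma>) = 1" "length (ribbon_composition n \<sigma>) \<ge> 2"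
      using foldl_FR_hd[of "[1,1]"] by auto
    moreover have "ribbon_composition n \<sigma> \<noteq> []" using \<open>length (ribbon_composition n \<sigma>) \<ge> 2\<close> by auto
    ultimately have "1 \<in> set (ribbon_composition n \<sigma>)"
      using hd_in_set by metis
    then show False using assms(4) by auto
  qed
  define P where "P = (\<lambda>i. 1 \<le> i \<and> i < n \<and> \<not> \<sigma> i < \<sigma> (Suc i))"
  obtain i where Pi: "P i" and least: "\<And>k. k < i \<Longrightarrow> \<not> P k"
    using ex exists_least_iff[of P] unfolding P_def by blast
  have i2: "i \<ge> 2"
  proof (rule ccontr)
    assume "\<not> i \<ge> 2"
    then have "i = 1" using Pi unfolding P_def by auto
    then show False using Pi s12 unfolding P_def by (simp add: numeral_2_eq_2)
  qed
  have "\<not> P (i-1)" using least i2 by simp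
  then have a: "\<sigma> (i-1) < \<sigma> i" using Pi i2 unfolding P_def by auto
  have "\<sigma> (i+1) \<noteq> \<sigma> i"
  proof
    assume "\<sigma> (i+1) = \<sigma> i"
    moreover have "i+1 \<in> {1..n}" "i \<in> {1..n}" using Pi unfolding P_def by auto
    ultimately have "i+1 = i" using assms(2) unfolding bij_betw_def inj_on_def by blast
    then show False by simp
  qed
  then have "\<sigma> (i+1) < \<sigma> i" using Pi unfolding P_def by auto
  then show ?thesis using a i2 Pi unfolding P_def by auto
qed



lemma sw_id: "x \<notin> {1,2} \<Longrightarrow> sw x = x" by (auto simp: sw_def)

definition K :: "nat \<Rightarrow> (nat\<Rightarrow>nat) \<Rightarrow> (nat\<Rightarrow>nat) \<Rightarrow> nat set" where
  "K n \<sigma> d = {i\<in>{1..<n}. (\<sigma> i < \<sigma> (Suc i)) = (d (\<sigma> i) < d (\<sigma> (Suc i)))}"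

definition btp :: "nat \<Rightarrow> nat \<Rightarrow> nat" where
  "btp p i = (if i = p then 2 else if odd (i+p) then 1 else 3)"

definition G :: "nat \<Rightarrow> (nat\<Rightarrow>nat) \<Rightarrow> nat \<Rightarrow> nat set" where
  "G n \<sigma> p = {i\<in>{1..<n}. (\<sigma> i < \<sigma> (Suc i)) = odd (i+p)}"

lemma btp_cmp: "1 \<le> p \<Longrightarrow> (btp p i < btp p (Suc i)) = odd (i+p)"
  by (auto simp: btp_def)

context
  fixes n :: nat and \<sigma> :: "nat \<Rightarrow> nat"
  assumes bij: "bij_betw \<sigma> {1..n} {1..n}"
begin

lemma inj: "inj_on \<sigma> {1..n}" using bij by (simp add: bij_betw_def)
lemma sig_in: "i \<in> {1..n} \<Longrightarrow> \<sigma> i \<in> {1..n}" using bij bij_betwE by blast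

lemma asc_K:
  assumes "\<forall>i\<in>{1..<n}. d (\<sigma> i) \<noteq> d (\<sigma> (Suc i))"
  shows "asc n \<sigma> d = card (K n \<sigma> d)"
  unfolding K_def by (rule asc_alt[OF inj assms])

lemma K_cong:
  assumes "\<forall>i\<in>{1..n}. d (\<sigma> i) = e (\<sigma> i)"
  shows "K n \<sigma> d = K n \<sigma> e"
  using assms unfolding K_def by auto

lemma K_btp:
  assumes "\<forall>i\<in>{1..n}. d (\<sigma> i) = btp p i" "1 \<le> p"
  shows "K n \<sigma> d = G n \<sigma> p"
  using assms btp_cmp[OF assms(2)] unfolding K_def G_def by auto

lemma G_even: "even (j+p) \<Longrightarrow> G n \<sigma> j = G n \<sigma> p"
  unfolding G_def by auto

lemma G_odd:
  assumes "odd (j+p)"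
  shows "card (G n \<sigma> j) + card (G n \<sigma> p) = n - 1"
proof -
  have "G n \<sigma> j \<union> G n \<sigma> p = {1..<n}" "G n \<sigma> j \<inter> G n \<sigma> p = {}"
    using assms unfolding G_def by auto
  moreover have "finite (G n \<sigma> j)" "finite (G n \<sigma> p)" unfolding G_def by auto
  ultimately have "card (G n \<sigma> j) + card (G n \<sigma> p) = card {1..<n}"
    using card_Un_disjoint[of "G n \<sigma> j" "G n \<sigma> p"] by simp
  then show ?thesis by simp
qed

lemma cnt_odd:
  assumes "odd (j+p)"
  shows "card {i\<in>{1..n}. odd (i+j)} + card {i\<in>{1..n}. odd (i+p)} = n"
proof -
  have "{i\<in>{1..n}. odd (i+j)} \<union> {i\<in>{1..n}. odd (i+p)} = {1..n}"
       "{i\<in>{1..n}. odd (i+j)} \<inter> {i\<in>{1..n}. odd (i+p)} = {}"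
    using assms by auto
  then have "card {i\<in>{1..n}. odd (i+j)} + card {i\<in>{1..n}. odd (i+p)} = card {1..n}"
    using card_Un_disjoint[of "{i\<in>{1..n}. odd (i+j)}" "{i\<in>{1..n}. odd (i+p)}"] by simp
  then show ?thesis by simp
qed

lemma FF_cases: "FF n \<sigma> c i = c (\<sigma> i) \<or> FF n \<sigma> c i = sw (c (\<sigma> i))"
  by (simp add: FF_def)

lemma FF_nonS: "\<not> SS \<sigma> c i \<Longrightarrow> FF n \<sigma> c i = c (\<sigma> i)"
  by (auto simp: FF_def SS_def sw_id)

lemma FF_S: "SS \<sigma> c i \<Longrightarrow> FF n \<sigma> c i \<in> {1,2}"
  using FF_cases[of c i] by (auto simp: SS_def sw_def)

lemma vals_ge1:
  assumes "proper_coloring n \<sigma> c" "i \<in> {1..n}"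
  shows "c (\<sigma> i) \<ge> 1"
  using assms sig_in unfolding proper_coloring_def by (auto simp: PiE_def Pi_def)

lemma ff_proper:
  assumes "proper_coloring n \<sigma> c"
  shows "proper_coloring n \<sigma> (ff n \<sigma> c)"
proof -
  have pe: "c \<in> {1..n} \<rightarrow>\<^sub>E {1..}" and pr: "\<forall>i\<in>{1..<n}. c (\<sigma> i) \<noteq> c (\<sigma> (Suc i))"
    using assms unfolding proper_coloring_def by auto
  have "ff n \<sigma> c \<in> {1..n} \<rightarrow>\<^sub>E {1..}"
  proof (rule PiE_I)
    fix x assume x: "x \<in> {1..n}"
    have "x \<in> \<sigma> ` {1..n}" using bij x by (simp add: bij_betw_def)
    then obtain i where i: "i \<in> {1..n}" "x = \<sigma> i" by blast
    have "c x \<in> {1..}" using pe x by (rule PiE_mem)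
    then have "c x \<ge> 1" by simp
    then have c1: "c (\<sigma> i) \<ge> 1" using i(2) by simp
    then have c2: "sw (c (\<sigma> i)) \<ge> 1" by (rule sw_ge1)
    have "FF n \<sigma> c i \<ge> 1" using FF_cases[of c i] c1 c2 by auto
    moreover have "ff n \<sigma> c x = FF n \<sigma> c i" using ff_pos[OF bij i(1)] i(2) by simp
    ultimately show "ff n \<sigma> c x \<in> {1..}" by simp
  next
    fix x assume "x \<notin> {1..n}" then show "ff n \<sigma> c x = undefined"
      using pe by (auto simp: ff_def PiE_def extensional_def)
  qed
  moreover have "\<forall>i\<in>{1..<n}. ff n \<sigma> c (\<sigma> i) \<noteq> ff n \<sigma> c (\<sigma> (Suc i))"
  proof
    fix i assume i: "i \<in> {1..<n}"
    then have i1: "i \<in> {1..n}" and i2: "Suc i \<in> {1..n}" by auto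
    have ne: "c (\<sigma> i) \<noteq> c (\<sigma> (Suc i))" using pr i by auto
    have "FF n \<sigma> c i \<noteq> FF n \<sigma> c (Suc i)"
    proof (cases "triple n \<sigma> c")
      case True then show ?thesis using ne sw_inj by (simp add: FF_def)
    next
      case nt: False
      show ?thesis
      proof (cases "SS \<sigma> c i")
        case Si: True
        show ?thesis
        proof (cases "SS \<sigma> c (Suc i)")
          case True
          then have "\<not> isoP n \<sigma> c i" "\<not> isoP n \<sigma> c (Suc i)" using Si i unfolding isoP_def by auto
          then show ?thesis using nt ne by (simp add: FF_def)
        next
          case False then show ?thesis using FF_S[OF Si] FF_nonS[OF False] by (auto simp: SS_def)
        qed
      next
        case nSi: False
        show ?thesis
        proof (cases "SS \<sigma> c (Suc i)")
          case True then show ?thesis using FF_S[OF True] FF_nonS[OF nSi] nSi by (auto simp: SS_def)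
        next
          case False then show ?thesis using FF_nonS[OF False] FF_nonS[OF nSi] ne by simp
        qed
      qed
    qed
    then show "ff n \<sigma> c (\<sigma> i) \<noteq> ff n \<sigma> c (\<sigma> (Suc i))"
      using ff_pos[OF bij i1] ff_pos[OF bij i2] by simp
  qed
  ultimately show ?thesis unfolding proper_coloring_def by simp
qed

lemma K_ff_nontriple:
  assumes "proper_coloring n \<sigma> c" "\<not> triple n \<sigma> c"
  shows "K n \<sigma> (ff n \<sigma> c) = K n \<sigma> c"
proof -
  have pr: "\<forall>i\<in>{1..<n}. c (\<sigma> i) \<noteq> c (\<sigma> (Suc i))"
    using assms unfolding proper_coloring_def by auto
  have "\<And>i. i \<in> {1..<n} \<Longrightarrow> (FF n \<sigma> c i < FF n \<sigma> c (Suc i)) = (c (\<sigma> i) < c (\<sigma> (Suc i)))"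
  proof -
    fix i assume i: "i \<in> {1..<n}"
    then have i1: "i \<in> {1..n}" and i2: "Suc i \<in> {1..n}" by auto
    have g1: "c (\<sigma> i) \<ge> 1" "c (\<sigma> (Suc i)) \<ge> 1" using vals_ge1[OF assms(1) i1] vals_ge1[OF assms(1) i2] by auto
    show "?thesis i"
    proof (cases "SS \<sigma> c i")
      case Si: True
      show ?thesis
      proof (cases "SS \<sigma> c (Suc i)")
        case True
        then have "\<not> isoP n \<sigma> c i" "\<not> isoP n \<sigma> c (Suc i)" using Si i unfolding isoP_def by auto
        then show ?thesis using assms(2) by (simp add: FF_def)
      next
        case False then show ?thesis using FF_S[OF Si] FF_nonS[OF False] g1 Si by (auto simp: SS_def)
      qed
    next
      case nSi: False
      show ?thesis
      proof (cases "SS \<sigma> c (Suc i)")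
        case True then show ?thesis using FF_S[OF True] FF_nonS[OF nSi] nSi g1 True by (auto simp: SS_def)
      next
        case False then show ?thesis using FF_nonS[OF False] FF_nonS[OF nSi] by simp
      qed
    qed
  qed
  then show ?thesis unfolding K_def
    using ff_pos[OF bij] by (auto simp del: One_nat_def)
qed

lemma flip:
  assumes pr: "\<forall>i\<in>{1..<n}. d (\<sigma> i) \<noteq> d (\<sigma> (Suc i))"
    and ge: "\<forall>i\<in>{1..n}. d (\<sigma> i) \<ge> 1"
    and j: "2 \<le> j" "j + 1 \<le> n"
    and only: "\<forall>i\<in>{1..<n}. SS \<sigma> d i \<and> SS \<sigma> d (Suc i) \<longrightarrow> i = j - 1 \<or> i = j"
    and S: "SS \<sigma> d (j-1)" "SS \<sigma> d j" "SS \<sigma> d (j+1)"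
    and e: "\<forall>i\<in>{1..n}. e (\<sigma> i) = sw (d (\<sigma> i))"
  shows "K n \<sigma> e = (K n \<sigma> d - {j-1, j}) \<union> ({j-1, j} - K n \<sigma> d)"
proof -
  have cmp: "(e (\<sigma> i) < e (\<sigma> (Suc i))) = (if i = j - 1 \<or> i = j then \<not> (d (\<sigma> i) < d (\<sigma> (Suc i)))
           else (d (\<sigma> i) < d (\<sigma> (Suc i))))" if i: "i \<in> {1..<n}" for i
  proof -
    have i1: "i \<in> {1..n}" "Suc i \<in> {1..n}" using i by auto
    have ne: "d (\<sigma> i) \<noteq> d (\<sigma> (Suc i))" using pr i by auto
    show ?thesis
    proof (cases "i = j - 1 \<or> i = j")
      case True
      then have "SS \<sigma> d i" "SS \<sigma> d (Suc i)" using S j by (auto simp: Suc_diff_le)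
      then show ?thesis using True ne e i1 by (auto simp: SS_def sw_def)
    next
      case False
      then have "\<not> (SS \<sigma> d i \<and> SS \<sigma> d (Suc i))" using only i by auto
      moreover have "d (\<sigma> i) \<ge> 1" "d (\<sigma> (Suc i)) \<ge> 1" using ge i1 by auto
      ultimately show ?thesis using False e i1 by (auto simp: SS_def sw_def)
    qed
  qed
  have jj: "j - 1 \<in> {1..<n}" "j \<in> {1..<n}" using j by auto
  show ?thesis
  proof (rule set_eqI)
    fix i
    show "i \<in> K n \<sigma> e \<longleftrightarrow> i \<in> (K n \<sigma> d - {j-1, j}) \<union> ({j-1, j} - K n \<sigma> d)"
    proof (cases "i \<in> {1..<n}")
      case True
      then show ?thesis using cmp[OF True] jj unfolding K_def by auto
    next
      case False
      then show ?thesis using jj unfolding K_def by auto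
    qed
  qed
qed

lemma card_sd_out:
  assumes "finite A" "a \<notin> A" "b \<notin> A" "a \<noteq> b"
  shows "card ((A - {a,b}) \<union> ({a,b} - A)) = card A + 2"
proof -
  have "(A - {a,b}) \<union> ({a,b} - A) = insert a (insert b A)" using assms by auto
  then show ?thesis using assms by simp
qed

lemma card_sd_in:
  assumes "finite A" "a \<in> A" "b \<in> A" "a \<noteq> b"
  shows "card ((A - {a,b}) \<union> ({a,b} - A)) + 2 = card A"
proof -
  have "(A - {a,b}) \<union> ({a,b} - A) = A - {a,b}" using assms by auto
  moreover have "card (A - {a,b}) = card A - 2" using assms by (simp add: card_Diff_subset)
  moreover have "card {a,b} \<le> card A" using assms by (intro card_mono) auto
  moreover have "card {a,b} = 2" using assms by simp
  ultimately show ?thesis by simp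
qed

lemma card_sd_one:
  assumes "finite A" "(a \<in> A) \<noteq> (b \<in> A)" "a \<noteq> b"
  shows "card ((A - {a,b}) \<union> ({a,b} - A)) = card A"
proof (cases "a \<in> A")
  case True
  then have "(A - {a,b}) \<union> ({a,b} - A) = insert b (A - {a})" using assms by auto
  moreover have "b \<notin> A - {a}" using assms True by auto
  moreover have "card (A - {a}) + 1 = card A" using assms True
    by (metis One_nat_def add.commute card.remove plus_1_eq_Suc)
  ultimately show ?thesis using assms by simp
next
  case False
  then have "(A - {a,b}) \<union> ({a,b} - A) = insert a (A - {b})" using assms by auto
  moreover have "a \<notin> A - {b}" using assms False by auto
  moreover have "b \<in> A" using assms False by auto
  moreover have "card (A - {b}) + 1 = card A" using assms \<open>b \<in> A\<close>
    by (metis One_nat_def add.commute card.remove plus_1_eq_Suc)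
  ultimately show ?thesis using assms by simp
qed

lemma K_finite: "finite (K n \<sigma> d)" unfolding K_def by simp

end


lemma sw_btp: "i \<noteq> q \<Longrightarrow> sw (btp q i) = (if odd (i+q) then 2 else 3)"
  by (auto simp: sw_def btp_def)

lemma sw_btp_q: "sw (btp q q) = 1" by (simp add: sw_def btp_def)

context
  fixes n :: nat and \<sigma> :: "nat \<Rightarrow> nat"
  assumes bij: "bij_betw \<sigma> {1..n} {1..n}"
begin

lemma SS_pair:
  assumes pc: "proper_coloring n \<sigma> c"
    and u1: "\<forall>i\<in>{1..n}. c (\<sigma> i) = 1 \<longrightarrow> i = q"
    and i: "i \<in> {1..<n}" and S: "SS \<sigma> c i" "SS \<sigma> c (Suc i)"
  shows "i = q \<or> Suc i = q"
proof -
  have "c (\<sigma> i) \<noteq> c (\<sigma> (Suc i))" using pc i unfolding proper_coloring_def by auto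
  then have "c (\<sigma> i) = 1 \<or> c (\<sigma> (Suc i)) = 1" using S by (auto simp: SS_def)
  then show ?thesis using u1 i by auto
qed

lemma triple_center:
  assumes pc: "proper_coloring n \<sigma> c"
    and q: "q \<in> {1..n}" "c (\<sigma> q) = 1"
    and u1: "\<forall>i\<in>{1..n}. c (\<sigma> i) = 1 \<longrightarrow> i = q"
    and tr: "triple n \<sigma> c"
  shows "2 \<le> q \<and> q + 1 \<le> n \<and> c (\<sigma> (q-1)) = 2 \<and> c (\<sigma> (q+1)) = 2"
proof -
  obtain j where j: "2 \<le> j" "j+1 \<le> n" "SS \<sigma> c (j-1)" "SS \<sigma> c j" "SS \<sigma> c (j+1)"
    using tr unfolding triple_def by blast
  have e: "Suc (j-1) = j" using j by simp
  have jm: "j-1 \<in> {1..<n}" using j by auto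
  have p1: "j - 1 = q \<or> j = q"
    using SS_pair[OF pc u1 jm j(3)] j(4) e by simp
  have p2: "j = q \<or> Suc j = q"
    using SS_pair[OF pc u1, of j] j by auto
  have jq: "j = q" using p1 p2 j by auto
  have m1: "j-1 \<in> {1..n}" "j-1 \<noteq> q" "j+1 \<in> {1..n}" "j+1 \<noteq> q" using jq j by auto
  have "c (\<sigma> (j-1)) \<noteq> 1" using u1 m1(1,2) by blast
  moreover have "c (\<sigma> (j+1)) \<noteq> 1" using u1 m1(3,4) by blast
  ultimately have "c (\<sigma> (j-1)) = 2" "c (\<sigma> (j+1)) = 2" using j by (auto simp: SS_def)
  then show ?thesis using jq j by auto
qed

lemma rigid:
  assumes pc: "proper_coloring n \<sigma> c"
    and v3: "\<forall>i\<in>{1..n}. c (\<sigma> i) \<in> {1,2,3}"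
    and q: "c (\<sigma> q) = 1"
    and u1: "\<forall>i\<in>{1..n}. c (\<sigma> i) = 1 \<longrightarrow> i = q"
    and qq: "2 \<le> q" "q + 1 \<le> n" "c (\<sigma> (q-1)) = 2" "c (\<sigma> (q+1)) = 2"
  shows "\<forall>i\<in>{1..n}. c (\<sigma> i) = sw (btp q i)"
proof -
  define T where "T = (\<lambda>i. sw (btp q i))"
  have Tq: "T q = 1" unfolding T_def by (rule sw_btp_q)
  have Tne: "i \<noteq> q \<Longrightarrow> T i = (if odd (i+q) then 2 else 3)" for i
    unfolding T_def by (rule sw_btp)
  have pr: "\<forall>i\<in>{1..<n}. c (\<sigma> i) \<noteq> c (\<sigma> (Suc i))" using pc unfolding proper_coloring_def by auto
  have step: "c (\<sigma> k) = T k" if "k \<in> {1..n}" "k \<noteq> q" "k' \<noteq> q" "k' \<in> {1..n}"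
      "c (\<sigma> k') = T k'" "c (\<sigma> k) \<noteq> c (\<sigma> k')" "k = Suc k' \<or> k' = Suc k" for k k'
  proof -
    have b1: "c (\<sigma> k) \<noteq> 1" using u1 that(1,2) by blast
    have b2: "c (\<sigma> k) \<in> {1,2,3}" using v3 that(1) by blast
    have a1: "c (\<sigma> k) \<in> {2,3}" using b1 b2 by auto
    have a2: "T k \<in> {2,3}" using Tne[OF that(2)] by auto
    have a3: "T k' \<in> {2,3}" using Tne[OF that(3)] by auto
    have a4: "T k' \<noteq> T k" using Tne[OF that(2)] Tne[OF that(3)] that(7) by auto
    have a5: "c (\<sigma> k) \<noteq> T k'" using that(5,6) by simp
    show ?thesis using a1 a2 a3 a4 a5 by auto
  qed
  have up: "q + t + 1 \<le> n \<longrightarrow> c (\<sigma> (q+t)) = T (q+t) \<and> c (\<sigma> (q+t+1)) = T (q+t+1)" for t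
  proof (induction t)
    case 0
    have "T (q+1) = 2" using Tne[of "q+1"] by auto
    then show ?case using Tq q qq by simp
  next
    case (Suc t)
    show ?case
    proof
      assume h: "q + Suc t + 1 \<le> n"
      then have a: "c (\<sigma> (q+t+1)) = T (q+t+1)" using Suc by simp
      have "c (\<sigma> (q+t+2)) = T (q+t+2)"
      proof (rule step[of _ "q+t+1"])
        show "c (\<sigma> (q + t + 2)) \<noteq> c (\<sigma> (q + t + 1))"
          using pr[rule_format, of "q+t+1"] h qq by auto
      qed (use h qq a in auto)
      then show "c (\<sigma> (q + Suc t)) = T (q + Suc t) \<and> c (\<sigma> (q + Suc t + 1)) = T (q + Suc t + 1)"
        using a by simp
    qed
  qed
  have down: "k + 1 + m = q \<longrightarrow> k \<ge> 1 \<longrightarrow> c (\<sigma> k) = T k \<and> c (\<sigma> (k+1)) = T (k+1)" for m k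
  proof (induction m arbitrary: k)
    case 0
    have "T (q-1) = 2" using Tne[of "q-1"] qq by (auto simp: Suc_diff_le)
    then show ?case using Tq q qq by auto
  next
    case (Suc m)
    show ?case
    proof (intro impI)
      assume h: "k + 1 + Suc m = q" "k \<ge> 1"
      have a: "c (\<sigma> (k+1)) = T (k+1)" using Suc.IH[of "k+1"] h by auto
      have f1: "k \<in> {1..n}" "k \<noteq> q" "Suc k \<noteq> q" "Suc k \<in> {1..n}" "k \<in> {1..<n}"
        using h qq by auto
      have f2: "c (\<sigma> k) \<noteq> c (\<sigma> (Suc k))" using pr f1(5) by blast
      have "c (\<sigma> k) = T k"
        by (rule step[of k "Suc k"]) (use f1 f2 a in auto)
      then show "c (\<sigma> k) = T k \<and> c (\<sigma> (k+1)) = T (k+1)" using a by simp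
    qed
  qed
  show ?thesis
  proof
    fix i assume i: "i \<in> {1..n}"
    show "c (\<sigma> i) = sw (btp q i)"
    proof (cases "i \<ge> q")
      case True
      show ?thesis
      proof (cases "i = q")
        case True then show ?thesis using q Tq T_def by simp
      next
        case False
        then have "q + (i - q - 1) + 1 = i" using True by auto
        then have "c (\<sigma> i) = T i" using up[of "i-q-1"] i by auto
        then show ?thesis unfolding T_def .
      qed
    next
      case False
      then have "i + 1 + (q - i - 1) = q" "i \<ge> 1" using i by auto
      then have "c (\<sigma> i) = T i" using down[of i "q-i-1"] by blast
      then show ?thesis unfolding T_def .
    qed
  qed
qed

end


context
  fixes n :: nat and \<sigma> :: "nat \<Rightarrow> nat"
  assumes bij: "bij_betw \<sigma> {1..n} {1..n}"
begin

lemma sw_eq1: "(sw x = 1) = (x = 2)" by (auto simp: sw_def)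
lemma sw_eq2: "(sw x = 2) = (x = 1)" by (auto simp: sw_def)
lemma sw_eq_big: "k \<notin> {1,2} \<Longrightarrow> (sw x = k) = (x = k)" by (auto simp: sw_def)

lemma FF_big: assumes "k \<notin> {1,2}"
  shows "{i\<in>{1..n}. FF n \<sigma> c i = k} = {i\<in>{1..n}. c (\<sigma> i) = k}"
proof -
  have "(FF n \<sigma> c i = k) = (c (\<sigma> i) = k)" for i
    using FF_cases[OF bij, of c i] sw_eq_big[OF assms, of "c (\<sigma> i)"] by auto
  then show ?thesis by auto
qed

lemma nontriple_counts:
  assumes pc: "proper_coloring n \<sigma> c"
    and q: "q \<in> {1..n}" "c (\<sigma> q) = 1"
    and u1: "\<forall>i\<in>{1..n}. c (\<sigma> i) = 1 \<longrightarrow> i = q"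
    and nt: "\<not> triple n \<sigma> c"
  shows "card {i\<in>{1..n}. FF n \<sigma> c i = 1} = card {i\<in>{1..n}. c (\<sigma> i) = 2}
       \<and> card {i\<in>{1..n}. FF n \<sigma> c i = 2} = 1"
proof (cases "isoP n \<sigma> c q")
  case iq: True
  have all: "FF n \<sigma> c i = sw (c (\<sigma> i))" if i: "i \<in> {1..n}" for i
  proof (cases "SS \<sigma> c i")
    case False
    then have "c (\<sigma> i) \<notin> {1,2}" by (simp add: SS_def)
    then have "sw (c (\<sigma> i)) = c (\<sigma> i)" by (rule sw_id)
    then show ?thesis using FF_nonS[OF bij False] by simp
  next
    case Si: True
    have "isoP n \<sigma> c i"
    proof (cases "i = q")
      case True then show ?thesis using iq by simp
    next
      case iq': False
      show ?thesis unfolding isoP_def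
      proof (intro conjI notI)
        assume h: "2 \<le> i \<and> SS \<sigma> c (i - 1)"
        have e: "Suc (i-1) = i" using h by simp
        have im: "i - 1 \<in> {1..<n}" using h i by auto
        have hs: "SS \<sigma> c (i-1)" using h by simp
        have hs2: "SS \<sigma> c (Suc (i-1))" using Si e by simp
        have "i - 1 = q \<or> i = q" using SS_pair[OF bij pc u1 im hs hs2] e by simp
        then have "i - 1 = q" using iq' by simp
        then have "q + 1 = i" using h by arith
        then have "q + 1 \<le> n \<and> SS \<sigma> c (q+1)" using Si i by simp
        then show False using iq unfolding isoP_def by blast
      next
        assume h: "i + 1 \<le> n \<and> SS \<sigma> c (i + 1)"
        have "i \<in> {1..<n}" using h i by auto
        then have "i = q \<or> i + 1 = q" using SS_pair[OF bij pc u1 _ Si] h by simp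
        then have "i + 1 = q" using iq' by simp
        then have "q - 1 = i" "2 \<le> q" using i by auto
        then have "2 \<le> q \<and> SS \<sigma> c (q-1)" using Si by simp
        then show False using iq unfolding isoP_def by blast
      qed
    qed
    then show ?thesis unfolding FF_def by simp
  qed
  have p1: "\<forall>i\<in>{1..n}. (FF n \<sigma> c i = 1) = (c (\<sigma> i) = 2)" using all sw_eq1 by simp
  have p2: "\<forall>i\<in>{1..n}. (FF n \<sigma> c i = 2) = (c (\<sigma> i) = 1)" using all sw_eq2 by simp
  have s1: "{i\<in>{1..n}. FF n \<sigma> c i = 1} = {i\<in>{1..n}. c (\<sigma> i) = 2}"
    using p1 by blast
  have s2: "{i\<in>{1..n}. FF n \<sigma> c i = 2} = {q}"
    using p2 u1 q by blast
  show ?thesis using s1 s2 by simp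
next
  case niq: False
  have "(2 \<le> q \<and> SS \<sigma> c (q-1)) \<or> (q + 1 \<le> n \<and> SS \<sigma> c (q+1))"
    using niq unfolding isoP_def by blast
  then obtain r where r: "r \<in> {1..n}" "SS \<sigma> c r" "r = q - 1 \<or> r = q + 1" "r \<noteq> q"
    and rq: "(r = q - 1 \<and> 2 \<le> q) \<or> (r = q + 1 \<and> q + 1 \<le> n)"
  proof (elim disjE conjE)
    assume "2 \<le> q" "SS \<sigma> c (q-1)"
    moreover have "q - 1 \<in> {1..n}" "q - 1 \<noteq> q" using \<open>2 \<le> q\<close> q by auto
    ultimately show thesis using that[of "q-1"] by blast
  next
    assume "q + 1 \<le> n" "SS \<sigma> c (q+1)"
    moreover have "q + 1 \<in> {1..n}" "q + 1 \<noteq> q" using \<open>q + 1 \<le> n\<close> by auto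
    ultimately show thesis using that[of "q+1"] by blast
  qed
  have cr1: "c (\<sigma> r) \<noteq> 1" using u1 r(1,4) by blast
  have cr: "c (\<sigma> r) = 2" using r(2) cr1 unfolding SS_def by blast
  have other: "\<not> SS \<sigma> c i" if "i \<in> {1..n}" "i = q - 1 \<or> i = q + 1" "i \<noteq> r" "i \<noteq> q" for i
  proof
    assume Si: "SS \<sigma> c i"
    have "2 \<le> q \<and> q + 1 \<le> n \<and> SS \<sigma> c (q-1) \<and> SS \<sigma> c (q+1)"
    proof (cases "i = q - 1")
      case True
      then have ir: "r = q + 1" "q + 1 \<le> n" using rq that(3) by auto
      have "2 \<le> q" using True that(1,4) by auto
      then show ?thesis using ir r(2) Si True by simp
    next
      case False
      then have ii: "i = q + 1" using that(2) by simp
      then have ir: "r = q - 1" "2 \<le> q" using rq that(3) by auto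
      have "q + 1 \<le> n" using ii that(1) by auto
      then show ?thesis using ir r(2) Si ii by simp
    qed
    moreover have "SS \<sigma> c q" using q by (simp add: SS_def)
    ultimately have "triple n \<sigma> c" unfolding triple_def by blast
    then show False using nt by simp
  qed
  have all: "FF n \<sigma> c i = (if i = q \<or> i = r then c (\<sigma> i) else sw (c (\<sigma> i)))"
    if i: "i \<in> {1..n}" for i
  proof (cases "i = q \<or> i = r")
    case True
    have "\<not> isoP n \<sigma> c i"
    proof (cases "i = q")
      case True then show ?thesis using niq by simp
    next
      case False
      then have ir: "i = r" using True by simp
      show ?thesis using rq q ir unfolding isoP_def by (auto simp: SS_def)
    qed
    then show ?thesis using True nt by (simp add: FF_def)
  next
    case False
    show ?thesis
    proof (cases "SS \<sigma> c i")
      case nS: False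
      then have "c (\<sigma> i) \<notin> {1,2}" by (simp add: SS_def)
      then have "sw (c (\<sigma> i)) = c (\<sigma> i)" by (rule sw_id)
      then show ?thesis using FF_nonS[OF bij nS] False by simp
    next
      case Si: True
      have "isoP n \<sigma> c i" unfolding isoP_def
      proof (intro conjI notI)
        assume h: "2 \<le> i \<and> SS \<sigma> c (i - 1)"
        have e: "Suc (i-1) = i" using h by simp
        have im: "i - 1 \<in> {1..<n}" using h i by auto
        have hs: "SS \<sigma> c (i-1)" using h by simp
        have hs2: "SS \<sigma> c (Suc (i-1))" using Si e by simp
        have "i - 1 = q \<or> i = q" using SS_pair[OF bij pc u1 im hs hs2] e by simp
        then have "i = q + 1" using False h by auto
        then show False using other[of i] i False Si by auto
      next
        assume h: "i + 1 \<le> n \<and> SS \<sigma> c (i + 1)"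
        have "i \<in> {1..<n}" using h i by auto
        then have "i = q \<or> i + 1 = q" using SS_pair[OF bij pc u1 _ Si] h by simp
        then have "i = q - 1" using False by auto
        then show False using other[of i] i False Si by auto
      qed
      then show ?thesis using False by (simp add: FF_def)
    qed
  qed
  define C2 where "C2 = {i\<in>{1..n}. c (\<sigma> i) = 2}"
  have s1: "{i\<in>{1..n}. FF n \<sigma> c i = 1} = insert q (C2 - {r})"
  proof (rule set_eqI)
    fix i show "i \<in> {i\<in>{1..n}. FF n \<sigma> c i = 1} \<longleftrightarrow> i \<in> insert q (C2 - {r})"
    proof (cases "i \<in> {1..n}")
      case True
      show ?thesis
      proof (cases "i = q \<or> i = r")
        case True
        then show ?thesis using all[OF \<open>i \<in> {1..n}\<close>] q cr r unfolding C2_def by auto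
      next
        case False
        then show ?thesis using all[OF \<open>i \<in> {1..n}\<close>] sw_eq1[of "c (\<sigma> i)"] \<open>i \<in> {1..n}\<close>
          unfolding C2_def by auto
      qed
    next
      case False then show ?thesis using q unfolding C2_def by auto
    qed
  qed
  have s2: "{i\<in>{1..n}. FF n \<sigma> c i = 2} = {r}"
  proof (rule set_eqI)
    fix i show "i \<in> {i\<in>{1..n}. FF n \<sigma> c i = 2} \<longleftrightarrow> i \<in> {r}"
    proof (cases "i \<in> {1..n}")
      case True
      show ?thesis
      proof (cases "i = q \<or> i = r")
        case True
        then show ?thesis using all[OF \<open>i \<in> {1..n}\<close>] q cr r by auto
      next
        case False
        then have "c (\<sigma> i) \<noteq> 1" using u1 \<open>i \<in> {1..n}\<close> by auto
        then show ?thesis using all[OF \<open>i \<in> {1..n}\<close>] sw_eq2[of "c (\<sigma> i)"] False by auto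
      qed
    next
      case False then show ?thesis using r by auto
    qed
  qed
  have "r \<in> C2" "q \<notin> C2" "finite C2" using cr r q unfolding C2_def by auto
  then have "card (insert q (C2 - {r})) = Suc (card (C2 - {r}))" "card C2 = Suc (card (C2 - {r}))"
    using card.remove[of C2 r] by auto
  then have "card (insert q (C2 - {r})) = card C2" by simp
  then show ?thesis using s1 s2 unfolding C2_def by simp
qed

end


lemma parity_contra:
  fixes n m x y q :: nat
  assumes "n = 2 * m" "x + y = n - 1" "x = y + 2 \<or> x + 2 = y" "q + 1 \<le> n"
  shows False
  using assms by presburger

lemma sw_bij: "bij_betw sw {1..} {1..}"
  by (rule bij_betwI[where g = sw]) (auto simp: sw_def)

lemma btp_vals: "btp p i \<in> {1,2,3}" by (auto simp: btp_def)
lemma btp_ne: "btp p i \<noteq> btp p (Suc i)" by (auto simp: btp_def)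

context
  fixes n :: nat and \<sigma> :: "nat \<Rightarrow> nat"
  assumes bij: "bij_betw \<sigma> {1..n} {1..n}"
begin

lemma lift_pos:
  assumes "i \<in> {1..n}"
  shows "(\<lambda>x. if x \<in> {1..n} then d (the_inv_into {1..n} \<sigma> x) else undefined) (\<sigma> i) = d i"
proof -
  have "\<sigma> i \<in> {1..n}" using sig_in[OF bij assms] .
  moreover have "the_inv_into {1..n} \<sigma> (\<sigma> i) = i"
    using assms bij by (simp add: bij_betw_def the_inv_into_f_f)
  ultimately show ?thesis by simp
qed

lemma vals_bound:
  fixes c :: "nat \<Rightarrow> nat"
  assumes "c \<in> {1..n} \<rightarrow>\<^sub>E {1..}" "v \<in> {1..n}" "\<forall>k\<ge>4. card {u\<in>{1..n}. c u = k} = 0"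
  shows "c v \<in> {1,2,3}"
proof -
  have "c v \<ge> 1" using assms(1,2) by (auto simp: PiE_def Pi_def)
  moreover have "\<not> c v \<ge> 4"
  proof
    assume h: "c v \<ge> 4"
    have "v \<in> {u\<in>{1..n}. c u = c v}" using assms(2) by simp
    then have "card {u\<in>{1..n}. c u = c v} \<noteq> 0" by auto
    then show False using assms(3) h by auto
  qed
  ultimately show ?thesis by auto
qed

lemma main_nonsym:
  assumes p0: "2 \<le> p0" "p0 + 1 \<le> n" "\<sigma> (p0-1) < \<sigma> p0" "\<sigma> (p0+1) < \<sigma> p0"
  shows "\<not> cqf_symmetric n \<sigma>"
proof
  assume sym: "cqf_symmetric n \<sigma>"
  define bt where "bt = btp p0"
  define b where "b = (\<lambda>x. if x \<in> {1..n} then bt (the_inv_into {1..n} \<sigma> x) else (undefined::nat))"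
  have b_pos: "b (\<sigma> i) = bt i" if "i \<in> {1..n}" for i
    unfolding b_def by (rule lift_pos[OF that])
  define \<mu> where "\<mu> = (\<lambda>k. card {v\<in>{1..n}. b v = k})"
  have \<mu>_pos: "\<mu> k = card {i\<in>{1..n}. bt i = k}" for k
  proof -
    have "\<mu> k = card {i\<in>{1..n}. b (\<sigma> i) = k}" unfolding \<mu>_def by (rule count_pos[OF bij])
    also have "{i\<in>{1..n}. b (\<sigma> i) = k} = {i\<in>{1..n}. bt i = k}" using b_pos by auto
    finally show ?thesis .
  qed
  define m where "m = \<mu> 1"
  have m_eq: "m = card {i\<in>{1..n}. odd (i+p0)}"
  proof -
    have "{i\<in>{1..n}. bt i = 1} = {i\<in>{1..n}. odd (i+p0)}" unfolding bt_def btp_def by auto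
    then show ?thesis unfolding m_def \<mu>_pos by simp
  qed
  have \<mu>2: "\<mu> 2 = 1"
  proof -
    have "{i\<in>{1..n}. bt i = 2} = {p0}" using p0 unfolding bt_def btp_def by auto
    then show ?thesis unfolding \<mu>_pos by simp
  qed
  have \<mu>big: "\<mu> k = 0" if "k \<ge> 4" for k
  proof -
    have "{i\<in>{1..n}. bt i = k} = {}" using that unfolding bt_def btp_def by auto
    then show ?thesis unfolding \<mu>_pos by simp
  qed
  have p0V: "p0 \<in> {1..n}" "p0 - 1 \<in> {1..n}" "p0 + 1 \<in> {1..n}" using p0 by auto
  have b_pe: "b \<in> {1..n} \<rightarrow>\<^sub>E {1..}"
  proof (rule PiE_I)
    fix x assume x: "x \<in> {1..n}"
    show "b x \<in> {1..}" using btp_vals[of p0 "the_inv_into {1..n} \<sigma> x"] x unfolding b_def bt_def by auto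
  next
    fix x assume x: "x \<notin> {1..n}" show "b x = undefined" unfolding b_def using x by (rule if_not_P)
  qed
  have b_pr: "\<forall>i\<in>{1..<n}. b (\<sigma> i) \<noteq> b (\<sigma> (Suc i))"
  proof
    fix i assume i: "i \<in> {1..<n}"
    then have "i \<in> {1..n}" "Suc i \<in> {1..n}" by auto
    then show "b (\<sigma> i) \<noteq> b (\<sigma> (Suc i))" using b_pos btp_ne unfolding bt_def by simp
  qed
  have b_proper: "proper_coloring n \<sigma> b" unfolding proper_coloring_def using b_pe b_pr by simp
  have Kb: "K n \<sigma> b = G n \<sigma> p0"
    by (rule K_btp[OF bij]) (use b_pos p0 in \<open>auto simp: bt_def\<close>)
  define \<beta> where "\<beta> = asc n \<sigma> b"
  have \<beta>G: "\<beta> = card (G n \<sigma> p0)" unfolding \<beta>_def using asc_K[OF bij b_pr] Kb by simp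
  define A where "A = {c. proper_coloring n \<sigma> c \<and> asc n \<sigma> c = \<beta> \<and>
      (\<forall>i\<ge>1. card {v\<in>{1..n}. c v = i} = (\<mu> \<circ> sw) i)}"
  define B where "B = {c. proper_coloring n \<sigma> c \<and> asc n \<sigma> c = \<beta> \<and>
      (\<forall>i\<ge>1. card {v\<in>{1..n}. c v = i} = \<mu> i)}"
  have eq: "card A = card B"
    using sym sw_bij unfolding cqf_symmetric_def cqf_coeff_def A_def B_def by blast
  have bB: "b \<in> B" unfolding B_def using b_proper \<beta>_def \<mu>_def by simp
  have finB: "finite B"
  proof (rule finite_subset)
    show "B \<subseteq> PiE {1..n} (\<lambda>_. {1,2,3})"
    proof
      fix c assume c: "c \<in> B"
      then have pe: "c \<in> {1..n} \<rightarrow>\<^sub>E {1..}" unfolding B_def proper_coloring_def by simp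
      have "\<forall>k\<ge>4. card {u\<in>{1..n}. c u = k} = 0" using c \<mu>big unfolding B_def by auto
      then have "\<forall>v\<in>{1..n}. c v \<in> {1,2,3}" using vals_bound[OF pe] by blast
      then show "c \<in> PiE {1..n} (\<lambda>_. {1,2,3})" using pe by (auto simp: PiE_def Pi_def)
    qed
  qed (simp add: finite_PiE)
  have ffb_notA: "ff n \<sigma> b \<notin> A"
  proof
    assume "ff n \<sigma> b \<in> A"
    then have asc1: "asc n \<sigma> (ff n \<sigma> b) = \<beta>" unfolding A_def by simp
    have Sb: "SS \<sigma> b (p0-1)" "SS \<sigma> b p0" "SS \<sigma> b (p0+1)"
      using b_pos[OF p0V(1)] b_pos[OF p0V(2)] b_pos[OF p0V(3)] p0(1)
      unfolding SS_def bt_def btp_def by auto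
    have trb: "triple n \<sigma> b" unfolding triple_def using Sb p0 by blast
    have ge: "\<forall>i\<in>{1..n}. b (\<sigma> i) \<ge> 1" using b_pos unfolding bt_def btp_def by auto
    have only: "\<forall>i\<in>{1..<n}. SS \<sigma> b i \<and> SS \<sigma> b (Suc i) \<longrightarrow> i = p0 - 1 \<or> i = p0"
    proof (intro ballI impI)
      fix i assume i: "i \<in> {1..<n}" and h: "SS \<sigma> b i \<and> SS \<sigma> b (Suc i)"
      have "i \<in> {1..n}" "Suc i \<in> {1..n}" using i by auto
      then have "btp p0 i \<in> {1,2}" "btp p0 (Suc i) \<in> {1,2}" using h b_pos unfolding SS_def bt_def by auto
      then have "i = p0 \<or> Suc i = p0" unfolding btp_def by (auto split: if_splits)
      then show "i = p0 - 1 \<or> i = p0" by auto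
    qed
    have e: "\<forall>i\<in>{1..n}. ff n \<sigma> b (\<sigma> i) = sw (b (\<sigma> i))"
      using ff_pos[OF bij] trb unfolding FF_def by simp
    have Kf: "K n \<sigma> (ff n \<sigma> b) = (K n \<sigma> b - {p0-1, p0}) \<union> ({p0-1, p0} - K n \<sigma> b)"
      by (rule flip[OF bij b_pr ge p0(1,2) only Sb e])
    have m1: "p0 - 1 \<in> K n \<sigma> b" "p0 \<in> K n \<sigma> b"
    proof -
      have "p0 - 1 \<in> {1..<n}" "Suc (p0-1) = p0" "odd (p0 - 1 + p0)" using p0 by auto
      then show "p0 - 1 \<in> K n \<sigma> b" unfolding Kb G_def using p0(3) by simp
      have "p0 \<in> {1..<n}" "\<not> \<sigma> p0 < \<sigma> (Suc p0)" using p0 by auto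
      then show "p0 \<in> K n \<sigma> b" unfolding Kb G_def by simp
    qed
    have "card (K n \<sigma> (ff n \<sigma> b)) + 2 = card (K n \<sigma> b)"
      unfolding Kf by (rule card_sd_in[OF bij K_finite[OF bij] m1]) (use p0 in auto)
    moreover have "asc n \<sigma> (ff n \<sigma> b) = card (K n \<sigma> (ff n \<sigma> b))"
      using ff_proper[OF bij b_proper] asc_K[OF bij] unfolding proper_coloring_def by blast
    moreover have "asc n \<sigma> b = card (K n \<sigma> b)" using asc_K[OF bij b_pr] .
    ultimately show False using asc1 \<beta>_def by simp
  qed
  have ffA: "ff n \<sigma> c \<in> B" if c: "c \<in> A" for c
  proof -
    have pc: "proper_coloring n \<sigma> c" and ascc: "asc n \<sigma> c = \<beta>"
      and cntA: "\<forall>i\<ge>1. card {v\<in>{1..n}. c v = i} = \<mu> (sw i)" using c unfolding A_def by auto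
    have pr: "\<forall>i\<in>{1..<n}. c (\<sigma> i) \<noteq> c (\<sigma> (Suc i))" using pc unfolding proper_coloring_def by simp
    have pe: "c \<in> {1..n} \<rightarrow>\<^sub>E {1..}" using pc unfolding proper_coloring_def by simp
    have cnt: "card {i\<in>{1..n}. c (\<sigma> i) = k} = \<mu> (sw k)" if "k \<ge> 1" for k
      using cntA that count_pos[OF bij, of c k] by simp
    have "\<forall>k\<ge>4. card {u\<in>{1..n}. c u = k} = 0"
    proof (intro allI impI)
      fix k :: nat assume "k \<ge> 4"
      then have "sw k = k" by (simp add: sw_def)
      then show "card {u\<in>{1..n}. c u = k} = 0" using cntA \<mu>big \<open>k \<ge> 4\<close> by simp
    qed
    then have v3': "\<forall>v\<in>{1..n}. c v \<in> {1,2,3}" using vals_bound[OF pe] by blast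
    have v3: "\<forall>i\<in>{1..n}. c (\<sigma> i) \<in> {1,2,3}" using v3' sig_in[OF bij] by blast
    have c1: "card {i\<in>{1..n}. c (\<sigma> i) = 1} = 1" using cnt[of 1] \<mu>2 by (simp add: sw_def)
    then obtain q where qset: "{i\<in>{1..n}. c (\<sigma> i) = 1} = {q}" using card_1_singletonE by blast
    have qin: "q \<in> {i\<in>{1..n}. c (\<sigma> i) = 1}" using qset by blast
    then have q: "q \<in> {1..n}" "c (\<sigma> q) = 1" by simp_all
    have u1: "\<forall>i\<in>{1..n}. c (\<sigma> i) = 1 \<longrightarrow> i = q"
    proof (intro ballI impI)
      fix i assume "i \<in> {1..n}" "c (\<sigma> i) = 1"
      then have "i \<in> {i\<in>{1..n}. c (\<sigma> i) = 1}" by simp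
      then show "i = q" using qset by blast
    qed
    have c2: "card {i\<in>{1..n}. c (\<sigma> i) = 2} = m" using cnt[of 2] unfolding m_def by (simp add: sw_def)
    have ge: "\<forall>i\<in>{1..n}. c (\<sigma> i) \<ge> 1" using vals_ge1[OF bij pc] by blast
    have pf: "proper_coloring n \<sigma> (ff n \<sigma> c)" by (rule ff_proper[OF bij pc])
    have prff: "\<forall>i\<in>{1..<n}. ff n \<sigma> c (\<sigma> i) \<noteq> ff n \<sigma> c (\<sigma> (Suc i))"
      using pf unfolding proper_coloring_def by simp
    have ffcnt: "card {v\<in>{1..n}. ff n \<sigma> c v = k} = card {i\<in>{1..n}. FF n \<sigma> c i = k}" for k
    proof -
      have "card {v\<in>{1..n}. ff n \<sigma> c v = k} = card {i\<in>{1..n}. ff n \<sigma> c (\<sigma> i) = k}"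
        by (rule count_pos[OF bij])
      also have "{i\<in>{1..n}. ff n \<sigma> c (\<sigma> i) = k} = {i\<in>{1..n}. FF n \<sigma> c i = k}"
        using ff_pos[OF bij] by auto
      finally show ?thesis .
    qed
    have ascf: "asc n \<sigma> (ff n \<sigma> c) = card (K n \<sigma> (ff n \<sigma> c))" by (rule asc_K[OF bij prff])
    have ascc': "\<beta> = card (K n \<sigma> c)" using asc_K[OF bij pr] ascc by simp
    show ?thesis
    proof (cases "triple n \<sigma> c")
      case tr: True
      have tc: "2 \<le> q" "q + 1 \<le> n" "c (\<sigma> (q-1)) = 2" "c (\<sigma> (q+1)) = 2"
        using triple_center[OF bij pc q u1 tr] by auto
      have FFsw: "FF n \<sigma> c i = sw (c (\<sigma> i))" for i using tr unfolding FF_def by simp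
      have counts: "\<forall>k\<ge>1. card {v\<in>{1..n}. ff n \<sigma> c v = k} = \<mu> k"
      proof (intro allI impI)
        fix k :: nat assume k: "k \<ge> 1"
        have "{i\<in>{1..n}. FF n \<sigma> c i = k} = {i\<in>{1..n}. c (\<sigma> i) = sw k}"
          unfolding FFsw by (metis sw_sw)
        then have "card {v\<in>{1..n}. ff n \<sigma> c v = k} = card {i\<in>{1..n}. c (\<sigma> i) = sw k}"
          using ffcnt by simp
        also have "\<dots> = \<mu> (sw (sw k))" using cnt[of "sw k"] sw_ge1[OF k] by simp
        finally show "card {v\<in>{1..n}. ff n \<sigma> c v = k} = \<mu> k" by simp
      qed
      have qV: "q - 1 \<in> {1..n}" "q + 1 \<in> {1..n}" using tc by auto
      have Sc: "SS \<sigma> c (q-1)" "SS \<sigma> c q" "SS \<sigma> c (q+1)" using tc q unfolding SS_def by auto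
      have only: "\<forall>i\<in>{1..<n}. SS \<sigma> c i \<and> SS \<sigma> c (Suc i) \<longrightarrow> i = q - 1 \<or> i = q"
      proof (intro ballI impI)
        fix i assume i: "i \<in> {1..<n}" and h: "SS \<sigma> c i \<and> SS \<sigma> c (Suc i)"
        have "i = q \<or> Suc i = q" using SS_pair[OF bij pc u1 i] h by blast
        then show "i = q - 1 \<or> i = q" by auto
      qed
      have e: "\<forall>i\<in>{1..n}. ff n \<sigma> c (\<sigma> i) = sw (c (\<sigma> i))" using ff_pos[OF bij] FFsw by simp
      have Kf: "K n \<sigma> (ff n \<sigma> c) = (K n \<sigma> c - {q-1, q}) \<union> ({q-1, q} - K n \<sigma> c)"
        by (rule flip[OF bij pr ge tc(1,2) only Sc e])
      have qm: "q - 1 \<in> {1..<n}" "Suc (q-1) = q" "q \<in> {1..<n}" using tc by auto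
      have mem1: "(q - 1 \<in> K n \<sigma> c) = (\<not> \<sigma> (q-1) < \<sigma> q)"
        using qm tc q unfolding K_def by auto
      have mem2: "(q \<in> K n \<sigma> c) = (\<sigma> q < \<sigma> (q+1))"
        using qm tc q unfolding K_def by auto
      have qne: "q - 1 \<noteq> q" using tc by auto
      have s1: "\<sigma> (q-1) \<noteq> \<sigma> q" "\<sigma> q \<noteq> \<sigma> (q+1)"
        using inj_onD[OF inj[OF bij]] qV q(1) qne by (metis n_not_Suc_n Suc_eq_plus1)+
      have fin: "finite (K n \<sigma> c)" by (rule K_finite[OF bij])
      have asc_eq: "asc n \<sigma> (ff n \<sigma> c) = \<beta>"
      proof (cases "(\<sigma> (q-1) < \<sigma> q) = (\<sigma> q < \<sigma> (q+1))")
        case True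
        then have "(q - 1 \<in> K n \<sigma> c) \<noteq> (q \<in> K n \<sigma> c)" using mem1 mem2 by simp
        then show ?thesis unfolding ascf Kf ascc' by (rule card_sd_one[OF bij fin _ qne])
      next
        case False
        have rig: "\<forall>i\<in>{1..n}. c (\<sigma> i) = sw (btp q i)" by (rule rigid[OF bij pc v3 q(2) u1 tc])
        have Kg: "K n \<sigma> (ff n \<sigma> c) = G n \<sigma> q"
          by (rule K_btp[OF bij]) (use e rig tc in auto)
        have c2': "m = card {i\<in>{1..n}. odd (i+q)}"
        proof -
          have pw: "(c (\<sigma> i) = 2) = odd (i+q)" if "i \<in> {1..n}" for i
          proof (cases "i = q")
            case True then show ?thesis using q by simp
          next
            case False then show ?thesis using rig that sw_btp[OF False] by simp
          qed
          have "{i\<in>{1..n}. c (\<sigma> i) = 2} = {i\<in>{1..n}. odd (i+q)}"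
            using pw by blast
          then show ?thesis using c2 by simp
        qed
        have key: "card (G n \<sigma> q) = \<beta> + 2 \<or> card (G n \<sigma> q) + 2 = \<beta>"
        proof (cases "\<sigma> (q-1) < \<sigma> q")
          case True
          then have "\<not> \<sigma> q < \<sigma> (q+1)" using False by simp
          then have "q - 1 \<notin> K n \<sigma> c" "q \<notin> K n \<sigma> c" using mem1 mem2 True by auto
          then have "card (K n \<sigma> (ff n \<sigma> c)) = card (K n \<sigma> c) + 2"
            unfolding Kf by (rule card_sd_out[OF bij fin _ _ qne])
          then show ?thesis using Kg ascc' by simp
        next
          case F2: False
          then have "\<sigma> q < \<sigma> (q+1)" using False by simp
          then have "q - 1 \<in> K n \<sigma> c" "q \<in> K n \<sigma> c" using mem1 mem2 F2 by auto
          then have "card (K n \<sigma> (ff n \<sigma> c)) + 2 = card (K n \<sigma> c)"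
            unfolding Kf by (rule card_sd_in[OF bij fin _ _ qne])
          then show ?thesis using Kg ascc' by simp
        qed
        show ?thesis
        proof (cases "even (q + p0)")
          case True
          then have "G n \<sigma> q = G n \<sigma> p0" by (rule G_even[OF bij])
          then show ?thesis using key \<beta>G by simp
        next
          case False
          then have g: "card (G n \<sigma> q) + card (G n \<sigma> p0) = n - 1" by (rule G_odd[OF bij])
          have "card {i\<in>{1..n}. odd (i+q)} + card {i\<in>{1..n}. odd (i+p0)} = n"
            using False by (rule cnt_odd[OF bij])
          then have "n = 2 * m" using c2' m_eq by simp
          then have False using parity_contra[of n m "card (G n \<sigma> q)" "card (G n \<sigma> p0)" q] g key \<beta>G tc(2) by simp
          then show ?thesis by simp
        qed
      qed
      show ?thesis unfolding B_def using pf asc_eq counts by simp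
    next
      case nt: False
      have nc: "card {i\<in>{1..n}. FF n \<sigma> c i = 1} = card {i\<in>{1..n}. c (\<sigma> i) = 2}
          \<and> card {i\<in>{1..n}. FF n \<sigma> c i = 2} = 1"
        by (rule nontriple_counts[OF bij pc q u1 nt])
      have counts: "\<forall>k\<ge>1. card {v\<in>{1..n}. ff n \<sigma> c v = k} = \<mu> k"
      proof (intro allI impI)
        fix k :: nat assume k: "k \<ge> 1"
        show "card {v\<in>{1..n}. ff n \<sigma> c v = k} = \<mu> k"
        proof (cases "k \<in> {1,2}")
          case True
          then show ?thesis using nc ffcnt c2 \<mu>2 unfolding m_def by auto
        next
          case False
          then have "card {v\<in>{1..n}. ff n \<sigma> c v = k} = card {i\<in>{1..n}. c (\<sigma> i) = k}"
            using ffcnt FF_big[OF bij False] by simp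
          also have "\<dots> = \<mu> (sw k)" using cnt k by simp
          also have "sw k = k" using False by (rule sw_id)
          finally show ?thesis .
        qed
      qed
      have "asc n \<sigma> (ff n \<sigma> c) = \<beta>"
        using ascf ascc' K_ff_nontriple[OF bij pc nt] by simp
      then show ?thesis unfolding B_def using pf counts by simp
    qed
  qed
  have inj: "inj_on (ff n \<sigma>) A"
    by (rule inj_on_inverseI[where g = "ff n \<sigma>"]) (rule ff_ff[OF bij])
  have sub: "ff n \<sigma> ` A \<subseteq> B - {b}"
  proof
    fix x assume "x \<in> ff n \<sigma> ` A"
    then obtain c where c: "c \<in> A" "x = ff n \<sigma> c" by blast
    have "x \<noteq> b"
    proof
      assume "x = b"
      then have "ff n \<sigma> b = c" using c ff_ff[OF bij] by metis
      then show False using ffb_notA c by simp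
    qed
    then show "x \<in> B - {b}" using ffA c by simp
  qed
  have "card A = card (ff n \<sigma> ` A)" using card_image[OF inj] by simp
  also have "\<dots> \<le> card (B - {b})" using card_mono[OF _ sub] finB by simp
  also have "\<dots> < card B" by (rule card_Diff1_less[OF finB bB])
  finally show False using eq by simp
qed

end

theorem proposition4p3:
  fixes n :: nat and \<sigma> :: "nat \<Rightarrow> nat"
  assumes "n \<ge> 1"
    and "is_labeled_path n \<sigma>"
    and "length (ribbon_composition n \<sigma>) \<ge> 2"
    and "\<forall>a\<in>set (ribbon_composition n \<sigma>). a \<ge> 2"
  shows "\<not> cqf_symmetric n \<sigma>"
proof -
  have bij: "bij_betw \<sigma> {1..n} {1..n}" using assms(2) unfolding is_labeled_path_def .
  obtain p0 where p0: "2 \<le> p0" "p0 + 1 \<le> n" "\<sigma> (p0-1) < \<sigma> p0" "\<sigma> (p0+1) < \<sigma> p0"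
    using peak_exists[OF assms(1) bij assms(3) assms(4)] by blast
  show ?thesis by (rule main_nonsym[OF bij p0])
qed

end
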